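(* Let ${\tt D}=({\tt M},{\tt C},\equiv,\underline{\cdot})$ be a reflective distillery whose calculus is deterministic, and let $s$ be an initial state. For every derivation $d:\underline{s}\multimap^* t$ there is an execution $\rho: s\to^* s'$ such that $t\equiv\underline{s'}$, $|\rho|_{\mathtt m}=|d|_{\mathtt m}$, $|\rho|_{\mathtt e}=|d|_{\mathtt e}$ and $|\rho|_{\mathtt p}=|d|$.
   Context: A distillery ${\tt D}=({\tt M},{\tt C},\equiv,\underline{\cdot})$ consists of: (1) an abstract machine ${\tt M}$: a deterministic labelled transition system $\to$ on states, with initial states (in bijection with closed $\lambda$-terms; states reachable from initial ones are reachable) and a partition of transitions into commutative ($\to_{\mathtt c}$) and principal ones, the latter partitioned into multiplicative ($\to_{\mathtt m}$) and exponential ($\to_{\mathtt e}$); (2) a calculus ${\tt C}$ given by rewriting relations $\multimap_{\mathtt m},\multimap_{\mathtt e}$ on terms, $\multimap:=\multimap_{\mathtt m}\cup\multimap_{\mathtt e}$; (3) an equivalence $\equiv$ on terms that is a strong bisimulation: for $\mathtt x\in\{\mathtt m,\mathtt e\}$, $t\equiv u$ and $t\multimap_{\mathtt x}t'$ imply $u\multimap_{\mathtt x}u'$ for some $u'\equiv t'$; (4) a decoding $\underline{\cdot}$ from states to terms such that on reachable states: $s\to_{\mathtt c}s'$ implies $\underline{s}\equiv\underline{s'}$; $s\to_{\mathtt m}s'$ implies $\underline{s}\multimap_{\mathtt m}t\equiv\underline{s'}$ for some $t$; $s\to_{\mathtt e}s'$ implies $\underline{s}\multimap_{\mathtt e}t\equiv\underline{s'}$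 for some $t$. Reflective: (Termination) $\to_{\mathtt c}$ terminates on reachable states; (Progress) if $s$ is reachable, no $\to_{\mathtt c}$ transition applies to $s$, and $\underline{s}\multimap_{\mathtt x}t$ with $\mathtt x\in\{\mathtt m,\mathtt e\}$, then $s\to_{\mathtt x}s'$ for some $s'$. The calculus is deterministic if every term $t$ admits at most one pair $(\mathtt x,u)$ with $t\multimap_{\mathtt x}u$. An execution is a sequence of transitions from an initial state; $|\rho|_{\mathtt m},|\rho|_{\mathtt e},|\rho|_{\mathtt p}$ count multiplicative, exponential and principal transitions of $\rho$; for a derivation $d$, $|d|$ is its length and $|d|_{\mathtt m},|d|_{\mathtt e}$ count its $\multimap_{\mathtt m}$ and $\multimap_{\mathtt e}$ steps. *)

theory Defs
  imports Main
begin

datatype lterm = LVar nat | LLam lterm | LApp lterm lterm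

fun loose_ok :: "nat \<Rightarrow> lterm \<Rightarrow> bool" where
  "loose_ok k (LVar i) = (i < k)"
| "loose_ok k (LLam t) = loose_ok (Suc k) t"
| "loose_ok k (LApp t u) = (loose_ok k t \<and> loose_ok k u)"

definition closed_lterm :: "lterm \<Rightarrow> bool" where
  "closed_lterm t = loose_ok 0 t"

datatype pkind = Mul | Exp

datatype tlabel = Comm | Princ pkind

inductive reachable :: "('s \<Rightarrow> bool) \<Rightarrow> ('s \<Rightarrow> tlabel \<Rightarrow> 's \<Rightarrow> bool) \<Rightarrow> 's \<Rightarrow> bool"
  for init step where
  reach_init: "init s \<Longrightarrow> reachable init step s"
| reach_step: "reachable init step s \<Longrightarrow> step s l s' \<Longrightarrow> reachable init step s'"

definition abstract_machine :: "('s \<Rightarrow> bool) \<Rightarrow> ('s \<Rightarrow> tlabel \<Rightarrow> 's \<Rightarrow> bool) \<Rightarrow> bool" where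
  "abstract_machine init step \<longleftrightarrow>
     (\<forall>s l1 s1 l2 s2. step s l1 s1 \<and> step s l2 s2 \<longrightarrow> l1 = l2 \<and> s1 = s2) \<and>
     (\<exists>f. bij_betw f {t. closed_lterm t} {s. init s})"

inductive exec :: "('s \<Rightarrow> tlabel \<Rightarrow> 's \<Rightarrow> bool) \<Rightarrow> 's \<Rightarrow> tlabel list \<Rightarrow> 's \<Rightarrow> bool"
  for step where
  exec_nil: "exec step s [] s"
| exec_cons: "step s l s1 \<Longrightarrow> exec step s1 rho s' \<Longrightarrow> exec step s (l # rho) s'"

text \<open>Derivations in the calculus: red x t u is t \<multimap>_x u.\<close>
inductive deriv :: "(pkind \<Rightarrow> 't \<Rightarrow> 't \<Rightarrow> bool) \<Rightarrow> 't \<Rightarrow> pkind list \<Rightarrow> 't \<Rightarrow> bool"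
  for red where
  deriv_nil: "deriv red t [] t"
| deriv_cons: "red x t t1 \<Longrightarrow> deriv red t1 d t' \<Longrightarrow> deriv red t (x # d) t'"

definition count_exec :: "tlabel \<Rightarrow> tlabel list \<Rightarrow> nat" where
  "count_exec l rho = length (filter (\<lambda>l'. l' = l) rho)"

definition count_principal :: "tlabel list \<Rightarrow> nat" where
  "count_principal rho = length (filter (\<lambda>l. l \<noteq> Comm) rho)"

definition count_deriv :: "pkind \<Rightarrow> pkind list \<Rightarrow> nat" where
  "count_deriv x d = length (filter (\<lambda>y. y = x) d)"

definition strong_bisim :: "('t \<Rightarrow> 't \<Rightarrow> bool) \<Rightarrow> (pkind \<Rightarrow> 't \<Rightarrow> 't \<Rightarrow> bool) \<Rightarrow> bool" where
  "strong_bisim eqv red \<longleftrightarrow>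
     (\<forall>x t u t'. eqv t u \<and> red x t t' \<longrightarrow> (\<exists>u'. red x u u' \<and> eqv t' u'))"

definition distillery ::
  "('s \<Rightarrow> bool) \<Rightarrow> ('s \<Rightarrow> tlabel \<Rightarrow> 's \<Rightarrow> bool) \<Rightarrow> (pkind \<Rightarrow> 't \<Rightarrow> 't \<Rightarrow> bool)
   \<Rightarrow> ('t \<Rightarrow> 't \<Rightarrow> bool) \<Rightarrow> ('s \<Rightarrow> 't) \<Rightarrow> bool" where
  "distillery init step red eqv dec \<longleftrightarrow>
     abstract_machine init step \<and>
     equivp eqv \<and>
     strong_bisim eqv red \<and>
     (\<forall>s s'. reachable init step s \<and> step s Comm s' \<longrightarrow> eqv (dec s) (dec s')) \<and>
     (\<forall>s s' x. reachable init step s \<and> step s (Princ x) s' \<longrightarrow>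
        (\<exists>t. red x (dec s) t \<and> eqv t (dec s')))"

definition reflective_distillery ::
  "('s \<Rightarrow> bool) \<Rightarrow> ('s \<Rightarrow> tlabel \<Rightarrow> 's \<Rightarrow> bool) \<Rightarrow> (pkind \<Rightarrow> 't \<Rightarrow> 't \<Rightarrow> bool)
   \<Rightarrow> ('t \<Rightarrow> 't \<Rightarrow> bool) \<Rightarrow> ('s \<Rightarrow> 't) \<Rightarrow> bool" where
  "reflective_distillery init step red eqv dec \<longleftrightarrow>
     distillery init step red eqv dec \<and>
     wfP (\<lambda>s' s. reachable init step s \<and> step s Comm s') \<and>
     (\<forall>s x t. reachable init step s \<and> \<not> (\<exists>s'. step s Comm s') \<and> red x (dec s) t
        \<longrightarrow> (\<exists>s'. step s (Princ x) s'))"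

definition deterministic_calculus :: "(pkind \<Rightarrow> 't \<Rightarrow> 't \<Rightarrow> bool) \<Rightarrow> bool" where
  "deterministic_calculus red \<longleftrightarrow>
     (\<forall>t x1 u1 x2 u2. red x1 t u1 \<and> red x2 t u2 \<longrightarrow> x1 = x2 \<and> u1 = u2)"

end

theory Submission
  imports Defs
begin

lemma key:
  assumes R: "reflective_distillery init step red eqv dec"
    and D: "deterministic_calculus red"
  shows "deriv red u d t \<Longrightarrow> reachable init step s \<Longrightarrow> eqv u (dec s) \<Longrightarrow>
    \<exists>rho s'. exec step s rho s' \<and> eqv t (dec s') \<and>
           count_exec (Princ Mul) rho = count_deriv Mul d \<and>
           count_exec (Princ Exp) rho = count_deriv Exp d \<and>
           count_principal rho = length d"
proof (induction d arbitrary: u s)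
  case Nil
  then have "t = u" by (auto elim: deriv.cases)
  then show ?case using Nil
    by (intro exI[of _ "[]"] exI[of _ s]) (auto intro: exec_nil simp: count_exec_def count_deriv_def count_principal_def)
next
  case (Cons x d)
  from Cons.prems(1) obtain u1 where ru: "red x u u1" and du: "deriv red u1 d t"
    by (auto elim: deriv.cases)
  from R have dist: "distillery init step red eqv dec"
    and wf: "wfP (\<lambda>s' s. reachable init step s \<and> step s Comm s')"
    and prog: "\<forall>s x t. reachable init step s \<and> \<not> (\<exists>s'. step s Comm s') \<and> red x (dec s) t
        \<longrightarrow> (\<exists>s'. step s (Princ x) s')"
    unfolding reflective_distillery_def by auto
  from dist have eq: "equivp eqv" and bis: "strong_bisim eqv red"
    and cm: "\<forall>s s'. reachable init step s \<and> step s Comm s' \<longrightarrow> eqv (dec s) (dec s')"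
    and pr: "\<forall>s s' x. reachable init step s \<and> step s (Princ x) s' \<longrightarrow>
        (\<exists>t. red x (dec s) t \<and> eqv t (dec s'))"
    unfolding distillery_def by auto
  have tr: "eqv a b \<Longrightarrow> eqv b c \<Longrightarrow> eqv a c" for a b c using eq by (meson equivp_transp)
  have sy: "eqv a b \<Longrightarrow> eqv b a" for a b using eq by (meson equivp_symp)
  have "reachable init step s \<longrightarrow> eqv u (dec s) \<longrightarrow>
    (\<exists>rho s'. exec step s rho s' \<and> eqv t (dec s') \<and>
           count_exec (Princ Mul) rho = count_deriv Mul (x#d) \<and>
           count_exec (Princ Exp) rho = count_deriv Exp (x#d) \<and>
           count_principal rho = length (x#d))"
  proof (induction s rule: wfp_induct_rule[OF wf])
    case (1 s)
    show ?case
    proof (intro impI)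
      assume rs: "reachable init step s" and es: "eqv u (dec s)"
      show "\<exists>rho s'. exec step s rho s' \<and> eqv t (dec s') \<and>
           count_exec (Princ Mul) rho = count_deriv Mul (x#d) \<and>
           count_exec (Princ Exp) rho = count_deriv Exp (x#d) \<and>
           count_principal rho = length (x#d)"
      proof (cases "\<exists>s2. step s Comm s2")
        case True
        then obtain s2 where st: "step s Comm s2" by blast
        have r2: "reachable init step s2" using rs st by (rule reach_step)
        have "eqv u (dec s2)" using es cm rs st tr by blast
        with 1 rs st r2 obtain rho s' where h: "exec step s2 rho s' \<and> eqv t (dec s') \<and>
           count_exec (Princ Mul) rho = count_deriv Mul (x#d) \<and>
           count_exec (Princ Exp) rho = count_deriv Exp (x#d) \<and>
           count_principal rho = length (x#d)" by blast
        show ?thesis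
          apply (rule exI[of _ "Comm # rho"], rule exI[of _ s'])
          using h st by (auto intro: exec_cons simp: count_exec_def count_principal_def)
      next
        case False
        from bis es ru obtain v where rv: "red x (dec s) v" and ev: "eqv u1 v"
          unfolding strong_bisim_def by blast
        from prog rs False rv obtain s2 where st: "step s (Princ x) s2" by blast
        from pr rs st obtain w where rw: "red x (dec s) w" and ew: "eqv w (dec s2)" by blast
        from D rv rw have "v = w" unfolding deterministic_calculus_def by blast
        with ev ew tr have e2: "eqv u1 (dec s2)" by blast
        have r2: "reachable init step s2" using rs st by (rule reach_step)
        from Cons.IH[OF du r2 e2] obtain rho s' where h: "exec step s2 rho s' \<and> eqv t (dec s') \<and>
           count_exec (Princ Mul) rho = count_deriv Mul d \<and>
           count_exec (Princ Exp) rho = count_deriv Exp d \<and>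
           count_principal rho = length d" by blast
        show ?thesis
          apply (rule exI[of _ "Princ x # rho"], rule exI[of _ s'])
          using h st by (cases x) (auto intro: exec_cons simp: count_exec_def count_principal_def count_deriv_def)
      qed
    qed
  qed
  then show ?case using Cons.prems by blast
qed

theorem mainTheorem5:
  fixes init :: "'s \<Rightarrow> bool" and step :: "'s \<Rightarrow> tlabel \<Rightarrow> 's \<Rightarrow> bool"
    and red :: "pkind \<Rightarrow> 't \<Rightarrow> 't \<Rightarrow> bool" and eqv :: "'t \<Rightarrow> 't \<Rightarrow> bool"
    and dec :: "'s \<Rightarrow> 't"
  assumes "reflective_distillery init step red eqv dec"
    and "deterministic_calculus red"
    and "init s"
    and "deriv red (dec s) d t"
  shows "\<exists>rho s'. exec step s rho s' \<and> eqv t (dec s') \<and>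
           count_exec (Princ Mul) rho = count_deriv Mul d \<and>
           count_exec (Princ Exp) rho = count_deriv Exp d \<and>
           count_principal rho = length d"
proof -
  have "equivp eqv" using assms(1) unfolding reflective_distillery_def distillery_def by blast
  then have "eqv (dec s) (dec s)" by (meson equivp_reflp)
  moreover have "reachable init step s" using assms(3) by (rule reach_init)
  ultimately show ?thesis using key[OF assms(1,2) assms(4)] by blast
qed

end
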